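(* Let $\mathbb{F}\in\{\mathbb{R},\mathbb{C}\}$. If $S\in\mathsf{GL}_m(\mathbb{F})$ and $T\in\mathsf{GL}_n(\mathbb{F})$ are Perron similarities, then $S\otimes T$ is a Perron similarity.
   Context: An invertible matrix $S\in\mathsf{GL}_n(\mathbb{F})$ is called a Perron similarity if there is an index $i\in\{1,\ldots,n\}$ such that the column $Se_i$ and the row $e_i^\top S^{-1}$ are both entrywise nonnegative (real) or both entrywise nonpositive (real); here $e_i$ is the $i$-th standard basis vector. $\otimes$ denotes the Kronecker product, $A\otimes B=[a_{ij}B]$ blockwise. *)

theory Defs
  imports "HOL-Analysis.Analysis" "HOL-Library.Complex_Order"
begin

text \<open>For complex numbers the order is that of HOL-Library.Complex_Order:
  0 \<le> z iff z is real and nonnegative; z \<le> 0 iff z is real and nonpositive.\<close>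

definition perron_similarity :: "('a::{semiring_1,ord})^'n^'n \<Rightarrow> bool" where
  "perron_similarity S \<longleftrightarrow> invertible S \<and>
     (\<exists>i. ((\<forall>j. 0 \<le> S $ j $ i) \<and> (\<forall>j. 0 \<le> matrix_inv S $ i $ j)) \<or>
          ((\<forall>j. S $ j $ i \<le> 0) \<and> (\<forall>j. matrix_inv S $ i $ j \<le> 0)))"

text \<open>Kronecker product; row/column index (i,k) corresponds to (i-1)n+k.\<close>
definition kronecker :: "('a::times)^'m^'m \<Rightarrow> 'a^'n^'n \<Rightarrow> 'a^('m \<times> 'n)^('m \<times> 'n)" where
  "kronecker A B = (\<chi> p q. A $ fst p $ fst q * B $ snd p $ snd q)"

end

theory Submission
  imports Defs
begin

lemma kron_mult:
  fixes A C :: "'a::comm_semiring_1^'m^'m" and B D :: "'a^'n^'n"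
  shows "kronecker A B ** kronecker C D = kronecker (A ** C) (B ** D)"
proof -
  have "(\<Sum>r\<in>UNIV. A $ fst p $ fst r * B $ snd p $ snd r * (C $ fst r $ fst q * D $ snd r $ snd q))
      = (\<Sum>i\<in>UNIV. A $ fst p $ i * C $ i $ fst q) * (\<Sum>k\<in>UNIV. B $ snd p $ k * D $ k $ snd q)"
    for p q :: "'m \<times> 'n"
  proof -
    have "(\<Sum>i\<in>UNIV. A $ fst p $ i * C $ i $ fst q) * (\<Sum>k\<in>UNIV. B $ snd p $ k * D $ k $ snd q)
        = (\<Sum>i\<in>UNIV. \<Sum>k\<in>UNIV. (A $ fst p $ i * C $ i $ fst q) * (B $ snd p $ k * D $ k $ snd q))"
      by (simp add: sum_product)
    also have "\<dots> = (\<Sum>r\<in>UNIV \<times> UNIV. (A $ fst p $ fst r * C $ fst r $ fst q) * (B $ snd p $ snd r * D $ snd r $ snd q))"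
      by (subst sum.cartesian_product) (simp add: case_prod_beta)
    finally show ?thesis by (simp add: ac_simps UNIV_Times_UNIV[symmetric] del: UNIV_Times_UNIV)
  qed
  then show ?thesis
    by (simp add: kronecker_def matrix_matrix_mult_def vec_eq_iff)
qed

lemma kron_one:
  "kronecker (mat 1 :: 'a::comm_semiring_1^'m^'m) (mat 1 :: 'a^'n^'n) = mat 1"
  by (auto simp: kronecker_def mat_def vec_eq_iff prod_eq_iff)

lemma inv_props:
  fixes A :: "'a::semiring_1^'n^'n"
  assumes "invertible A"
  shows "A ** matrix_inv A = mat 1 \<and> matrix_inv A ** A = mat 1"
  using assms unfolding invertible_def matrix_inv_def by (rule someI_ex)

lemma inv_unique:
  fixes A B :: "'a::semiring_1^'n^'n"
  assumes "invertible A" "A ** B = mat 1"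
  shows "matrix_inv A = B"
proof -
  have "matrix_inv A = matrix_inv A ** (A ** B)" using assms(2) by simp
  also have "\<dots> = (matrix_inv A ** A) ** B" by (simp add: matrix_mul_assoc)
  also have "\<dots> = B" using inv_props[OF assms(1)] by simp
  finally show ?thesis .
qed

lemma kron_inv:
  fixes S :: "'a::comm_semiring_1^'m^'m" and T :: "'a^'n^'n"
  assumes "invertible S" "invertible T"
  shows "invertible (kronecker S T) \<and> matrix_inv (kronecker S T) = kronecker (matrix_inv S) (matrix_inv T)"
proof -
  have 1: "kronecker S T ** kronecker (matrix_inv S) (matrix_inv T) = mat 1"
    using inv_props[OF assms(1)] inv_props[OF assms(2)] by (simp add: kron_mult kron_one)
  have 2: "kronecker (matrix_inv S) (matrix_inv T) ** kronecker S T = mat 1"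
    using inv_props[OF assms(1)] inv_props[OF assms(2)] by (simp add: kron_mult kron_one)
  have inv: "invertible (kronecker S T)" unfolding invertible_def using 1 2 by blast
  show ?thesis using inv inv_unique[OF inv 1] by simp
qed

lemma gen:
  fixes S :: "'a::{comm_ring_1,ordered_ring}^'m^'m" and T :: "'a^'n^'n"
  assumes "perron_similarity S" "perron_similarity T"
  shows "perron_similarity (kronecker S T)"
proof -
  from assms obtain i where hi: "invertible S"
    "((\<forall>j. 0 \<le> S $ j $ i) \<and> (\<forall>j. 0 \<le> matrix_inv S $ i $ j)) \<or>
          ((\<forall>j. S $ j $ i \<le> 0) \<and> (\<forall>j. matrix_inv S $ i $ j \<le> 0))"
    unfolding perron_similarity_def by blast
  from assms obtain k where hk: "invertible T"
    "((\<forall>j. 0 \<le> T $ j $ k) \<and> (\<forall>j. 0 \<le> matrix_inv T $ k $ j)) \<or>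
          ((\<forall>j. T $ j $ k \<le> 0) \<and> (\<forall>j. matrix_inv T $ k $ j \<le> 0))"
    unfolding perron_similarity_def by blast
  note K = kron_inv[OF hi(1) hk(1)]
  have "((\<forall>j. 0 \<le> kronecker S T $ j $ (i,k)) \<and> (\<forall>j. 0 \<le> matrix_inv (kronecker S T) $ (i,k) $ j)) \<or>
          ((\<forall>j. kronecker S T $ j $ (i,k) \<le> 0) \<and> (\<forall>j. matrix_inv (kronecker S T) $ (i,k) $ j \<le> 0))"
    unfolding K[THEN conjunct2] using hi(2) hk(2)
    by (auto simp: kronecker_def intro: mult_nonneg_nonneg mult_nonpos_nonpos
        mult_nonneg_nonpos mult_nonpos_nonneg)
  then show ?thesis unfolding perron_similarity_def using K by blast
qed

theorem theorem4p2:
  shows "(\<forall>(S::real^'m^'m) (T::real^'n^'n).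
            perron_similarity S \<and> perron_similarity T \<longrightarrow> perron_similarity (kronecker S T))
       \<and> (\<forall>(S::complex^'m^'m) (T::complex^'n^'n).
            perron_similarity S \<and> perron_similarity T \<longrightarrow> perron_similarity (kronecker S T))"
  by (intro conjI allI impI; rule gen; simp)

end
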